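(* Let $\mathbf{C}$ be a locally small category all of whose morphisms are monomorphisms, and let $\mathfrak{G} = (G_A)_{A \in \mathrm{Ob}(\mathbf{C})}$ be a family of groups with $G_A \le \mathrm{Aut}_\mathbf{C}(A)$ for all $A$. Then for every $A \in \mathrm{Ob}(\mathbf{C})$, $$t_\mathbf{C}(A) = |G_A| \cdot t^\mathfrak{G}_\mathbf{C}(A),$$ where the equality is read in $\mathbb{N}_\infty$ (in particular, if $G_A$ is infinite then $t_\mathbf{C}(A) = \infty$).
   Context: $\mathrm{Aut}_\mathbf{C}(A)$ is the group of invertible morphisms $A \to A$. For $f, g \in \hom(A,B)$ write $f \sim_\mathfrak{G} g$ if $f = g \cdot \alpha$ for some $\alpha \in G_A$; let $\binom{B}{A}_\mathfrak{G} = \hom(A,B)/{\sim_\mathfrak{G}} = \{f \cdot G_A : f \in \hom(A,B)\}$, and for $w \in \hom(B,C)$ let $w \cdot \binom{B}{A}_\mathfrak{G} = \{(w\cdot f)/{\sim_\mathfrak{G}} : f \in \hom(A,B)\}$. For $k,t \in \mathbb{N}$, $C \overset{\mathfrak{G}}{\longrightarrow} (B)^A_{k,t}$ means: for every coloring $\chi : \binom{C}{A}_\mathfrak{G} \to k=\{0,\dots,k-1\}$ there is $w \in \hom(B,C)$ with $|\chi(w \cdot \binom{B}{A}_\mathfrak{G})| \le t$. The small $\mathfrak{G}$-Ramsey degree $t^\mathfrak{G}_\mathbf{C}(A)$ is the least positive integer $n$ such that for all $k \in \mathbb{N}$ and all $B \in \mathrm{Ob}(\mathbf{C})$ there is $C$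 with $C \overset{\mathfrak{G}}{\longrightarrow} (B)^A_{k,n}$, and $\infty$ if there is none. The small embedding Ramsey degree $t_\mathbf{C}(A)$ is $t^\mathfrak{G}_\mathbf{C}(A)$ for the family $G_A = \{\mathrm{id}_A\}$ (so classes are single morphisms). Convention: $\mathbb{N}_\infty = \{1,2,\dots,\infty\}$ with $\infty \cdot n = n \cdot \infty = \infty\cdot\infty = \infty$, and $|G_A|$ is taken to be $\infty$ when $G_A$ is infinite. *)

theory Defs
  imports Main "HOL-Library.Extended_Nat"
begin

text \<open>A (locally small) category presented by a set of objects Ob, hom-sets
  hom A B, composition cmp w f (meaning w after f, written w . f in the paper),
  and identities idm A.\<close>

definition category ::
  "'o set \<Rightarrow> ('o \<Rightarrow> 'o \<Rightarrow> 'm set) \<Rightarrow> ('m \<Rightarrow> 'm \<Rightarrow> 'm) \<Rightarrow> ('o \<Rightarrow> 'm) \<Rightarrow> bool" where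
  "category Ob hom cmp idm \<longleftrightarrow>
     (\<forall>A\<in>Ob. \<forall>B\<in>Ob. \<forall>A'\<in>Ob. \<forall>B'\<in>Ob. hom A B \<inter> hom A' B' \<noteq> {} \<longrightarrow> A = A' \<and> B = B') \<and>
     (\<forall>A\<in>Ob. idm A \<in> hom A A) \<and>
     (\<forall>A\<in>Ob. \<forall>B\<in>Ob. \<forall>C\<in>Ob. \<forall>f\<in>hom A B. \<forall>g\<in>hom B C. cmp g f \<in> hom A C) \<and>
     (\<forall>A\<in>Ob. \<forall>B\<in>Ob. \<forall>f\<in>hom A B. cmp (idm B) f = f \<and> cmp f (idm A) = f) \<and>
     (\<forall>A\<in>Ob. \<forall>B\<in>Ob. \<forall>C\<in>Ob. \<forall>D\<in>Ob. \<forall>f\<in>hom A B. \<forall>g\<in>hom B C. \<forall>h\<in>hom C D.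
        cmp h (cmp g f) = cmp (cmp h g) f)"

definition all_mono ::
  "'o set \<Rightarrow> ('o \<Rightarrow> 'o \<Rightarrow> 'm set) \<Rightarrow> ('m \<Rightarrow> 'm \<Rightarrow> 'm) \<Rightarrow> bool" where
  "all_mono Ob hom cmp \<longleftrightarrow>
     (\<forall>B\<in>Ob. \<forall>C\<in>Ob. \<forall>h\<in>hom B C. \<forall>A\<in>Ob. \<forall>f\<in>hom A B. \<forall>g\<in>hom A B.
        cmp h f = cmp h g \<longrightarrow> f = g)"

definition Aut ::
  "('o \<Rightarrow> 'o \<Rightarrow> 'm set) \<Rightarrow> ('m \<Rightarrow> 'm \<Rightarrow> 'm) \<Rightarrow> ('o \<Rightarrow> 'm) \<Rightarrow> 'o \<Rightarrow> 'm set" where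
  "Aut hom cmp idm A =
     {f \<in> hom A A. \<exists>g\<in>hom A A. cmp g f = idm A \<and> cmp f g = idm A}"

definition subgroup_Aut ::
  "('o \<Rightarrow> 'o \<Rightarrow> 'm set) \<Rightarrow> ('m \<Rightarrow> 'm \<Rightarrow> 'm) \<Rightarrow> ('o \<Rightarrow> 'm) \<Rightarrow> 'o \<Rightarrow> 'm set \<Rightarrow> bool" where
  "subgroup_Aut hom cmp idm A G \<longleftrightarrow>
     G \<subseteq> Aut hom cmp idm A \<and> idm A \<in> G \<and>
     (\<forall>f\<in>G. \<forall>g\<in>G. cmp f g \<in> G) \<and>
     (\<forall>f\<in>G. \<exists>g\<in>G. cmp g f = idm A \<and> cmp f g = idm A)"

definition gclass :: "('m \<Rightarrow> 'm \<Rightarrow> 'm) \<Rightarrow> ('o \<Rightarrow> 'm set) \<Rightarrow> 'o \<Rightarrow> 'm \<Rightarrow> 'm set" where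
  "gclass cmp G A f = (\<lambda>\<alpha>. cmp f \<alpha>) ` G A"

definition gbinom ::
  "('o \<Rightarrow> 'o \<Rightarrow> 'm set) \<Rightarrow> ('m \<Rightarrow> 'm \<Rightarrow> 'm) \<Rightarrow> ('o \<Rightarrow> 'm set) \<Rightarrow> 'o \<Rightarrow> 'o \<Rightarrow> 'm set set" where
  "gbinom hom cmp G B A = gclass cmp G A ` hom A B"

definition gbinom_comp ::
  "('o \<Rightarrow> 'o \<Rightarrow> 'm set) \<Rightarrow> ('m \<Rightarrow> 'm \<Rightarrow> 'm) \<Rightarrow> ('o \<Rightarrow> 'm set) \<Rightarrow> 'm \<Rightarrow> 'o \<Rightarrow> 'o \<Rightarrow> 'm set set" where
  "gbinom_comp hom cmp G w B A = (\<lambda>f. gclass cmp G A (cmp w f)) ` hom A B"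

definition garrow ::
  "('o \<Rightarrow> 'o \<Rightarrow> 'm set) \<Rightarrow> ('m \<Rightarrow> 'm \<Rightarrow> 'm) \<Rightarrow> ('o \<Rightarrow> 'm set) \<Rightarrow> 'o \<Rightarrow> 'o \<Rightarrow> 'o \<Rightarrow> nat \<Rightarrow> nat \<Rightarrow> bool" where
  "garrow hom cmp G C B A k t \<longleftrightarrow>
     (\<forall>\<chi> :: 'm set \<Rightarrow> nat. (\<forall>X\<in>gbinom hom cmp G C A. \<chi> X < k) \<longrightarrow>
        (\<exists>w\<in>hom B C. card (\<chi> ` gbinom_comp hom cmp G w B A) \<le> t))"

definition small_G_ramsey_degree ::
  "'o set \<Rightarrow> ('o \<Rightarrow> 'o \<Rightarrow> 'm set) \<Rightarrow> ('m \<Rightarrow> 'm \<Rightarrow> 'm) \<Rightarrow> ('o \<Rightarrow> 'm set) \<Rightarrow> 'o \<Rightarrow> enat" where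
  "small_G_ramsey_degree Ob hom cmp G A =
     (let P = (\<lambda>n::nat. 0 < n \<and> (\<forall>k::nat. \<forall>B\<in>Ob. \<exists>C\<in>Ob. garrow hom cmp G C B A k n))
      in if (\<exists>n. P n) then enat (LEAST n. P n) else \<infinity>)"

definition small_ramsey_degree ::
  "'o set \<Rightarrow> ('o \<Rightarrow> 'o \<Rightarrow> 'm set) \<Rightarrow> ('m \<Rightarrow> 'm \<Rightarrow> 'm) \<Rightarrow> ('o \<Rightarrow> 'm) \<Rightarrow> 'o \<Rightarrow> enat" where
  "small_ramsey_degree Ob hom cmp idm A =
     small_G_ramsey_degree Ob hom cmp (\<lambda>X. {idm X}) A"

definition ecard :: "'a set \<Rightarrow> enat" where
  "ecard S = (if finite S then enat (card S) else \<infinity>)"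

end

theory Submission
  imports Defs "HOL-Library.FuncSet"
begin

locale rsetting =
  fixes Ob :: "'o set" and hom :: "'o \<Rightarrow> 'o \<Rightarrow> 'm set"
    and cmp :: "'m \<Rightarrow> 'm \<Rightarrow> 'm" and idm :: "'o \<Rightarrow> 'm"
    and G :: "'o \<Rightarrow> 'm set" and A :: 'o
  assumes cat: "category Ob hom cmp idm"
    and mono: "all_mono Ob hom cmp"
    and grp: "\<forall>X\<in>Ob. subgroup_Aut hom cmp idm X (G X)"
    and AOb: "A \<in> Ob"
begin

lemma idA: "idm A \<in> hom A A" using cat AOb unfolding category_def by blast
lemma idG: "idm A \<in> G A" using grp AOb unfolding subgroup_Aut_def by blast
lemma GA_hom: "G A \<subseteq> hom A A" using grp AOb unfolding subgroup_Aut_def Aut_def by blast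
lemma Gmul: "\<alpha> \<in> G A \<Longrightarrow> \<beta> \<in> G A \<Longrightarrow> cmp \<alpha> \<beta> \<in> G A"
  using grp AOb unfolding subgroup_Aut_def by blast
lemma Ginv: "\<alpha> \<in> G A \<Longrightarrow> \<exists>\<beta>\<in>G A. cmp \<beta> \<alpha> = idm A \<and> cmp \<alpha> \<beta> = idm A"
  using grp AOb unfolding subgroup_Aut_def by blast
lemma comp: "X \<in> Ob \<Longrightarrow> Y \<in> Ob \<Longrightarrow> Z \<in> Ob \<Longrightarrow> f \<in> hom X Y \<Longrightarrow> g \<in> hom Y Z \<Longrightarrow> cmp g f \<in> hom X Z"
  using cat unfolding category_def by blast
lemma assoc: "X \<in> Ob \<Longrightarrow> Y \<in> Ob \<Longrightarrow> Z \<in> Ob \<Longrightarrow> W \<in> Ob \<Longrightarrow> f \<in> hom X Y \<Longrightarrow> g \<in> hom Y Z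
   \<Longrightarrow> h \<in> hom Z W \<Longrightarrow> cmp h (cmp g f) = cmp (cmp h g) f"
  using cat unfolding category_def by blast
lemma idr: "X \<in> Ob \<Longrightarrow> Y \<in> Ob \<Longrightarrow> f \<in> hom X Y \<Longrightarrow> cmp f (idm X) = f"
  using cat unfolding category_def by blast
lemma idl: "X \<in> Ob \<Longrightarrow> Y \<in> Ob \<Longrightarrow> f \<in> hom X Y \<Longrightarrow> cmp (idm Y) f = f"
  using cat unfolding category_def by blast
lemma canc: "Y \<in> Ob \<Longrightarrow> Z \<in> Ob \<Longrightarrow> X \<in> Ob \<Longrightarrow> h \<in> hom Y Z \<Longrightarrow> f \<in> hom X Y \<Longrightarrow> g \<in> hom X Y
   \<Longrightarrow> cmp h f = cmp h g \<Longrightarrow> f = g"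
  using mono unfolding all_mono_def by blast

lemma gclass_E: "C \<in> Ob \<Longrightarrow> f \<in> hom A C \<Longrightarrow> gclass cmp (\<lambda>X. {idm X}) A f = {f}"
  unfolding gclass_def using idr AOb by auto

lemma mem_own: "C \<in> Ob \<Longrightarrow> f \<in> hom A C \<Longrightarrow> f \<in> gclass cmp G A f"
  unfolding gclass_def using idr[OF AOb, of C f] idG by force

lemma shift_hom: "C \<in> Ob \<Longrightarrow> f \<in> hom A C \<Longrightarrow> \<alpha> \<in> G A \<Longrightarrow> cmp f \<alpha> \<in> hom A C"
  using comp[OF AOb AOb] GA_hom by blast

lemma gclass_shift: assumes C: "C \<in> Ob" and f: "f \<in> hom A C" and a: "\<alpha> \<in> G A"
  shows "gclass cmp G A (cmp f \<alpha>) = gclass cmp G A f"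
proof
  show "gclass cmp G A (cmp f \<alpha>) \<subseteq> gclass cmp G A f"
  proof
    fix x assume "x \<in> gclass cmp G A (cmp f \<alpha>)"
    then obtain \<beta> where b: "\<beta> \<in> G A" "x = cmp (cmp f \<alpha>) \<beta>" unfolding gclass_def by auto
    have "x = cmp f (cmp \<alpha> \<beta>)" using b assoc[OF AOb AOb AOb C, of \<beta> \<alpha> f] a f GA_hom by (metis subsetD)
    then show "x \<in> gclass cmp G A f" unfolding gclass_def using Gmul a b by auto
  qed
next
  show "gclass cmp G A f \<subseteq> gclass cmp G A (cmp f \<alpha>)"
  proof
    fix x assume "x \<in> gclass cmp G A f"
    then obtain \<beta> where b: "\<beta> \<in> G A" "x = cmp f \<beta>" unfolding gclass_def by auto
    obtain \<gamma> where g: "\<gamma> \<in> G A" "cmp \<alpha> \<gamma> = idm A" using Ginv a by blast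
    have h: "\<alpha> \<in> hom A A" "\<beta> \<in> hom A A" "\<gamma> \<in> hom A A" using a b g GA_hom by auto
    have "cmp (cmp f \<alpha>) (cmp \<gamma> \<beta>) = cmp f (cmp \<alpha> (cmp \<gamma> \<beta>))"
      using assoc[OF AOb AOb AOb C, of "cmp \<gamma> \<beta>" \<alpha> f] h f comp[OF AOb AOb AOb] by auto
    also have "\<dots> = cmp f (cmp (cmp \<alpha> \<gamma>) \<beta>)" using assoc[OF AOb AOb AOb AOb, of \<beta> \<gamma> \<alpha>] h by auto
    also have "\<dots> = x" using g b idl[OF AOb AOb] h by auto
    finally show "x \<in> gclass cmp G A (cmp f \<alpha>)" unfolding gclass_def using Gmul g b by force
  qed
qed

definition rep :: "'o \<Rightarrow> 'm set \<Rightarrow> 'm" where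
  "rep C X = (SOME h. h \<in> hom A C \<and> X = gclass cmp G A h)"
definition pos :: "'o \<Rightarrow> 'm \<Rightarrow> 'm" where
  "pos C f = (SOME \<alpha>. \<alpha> \<in> G A \<and> f = cmp (rep C (gclass cmp G A f)) \<alpha>)"

lemma rep: "f \<in> hom A C \<Longrightarrow> rep C (gclass cmp G A f) \<in> hom A C \<and> gclass cmp G A (rep C (gclass cmp G A f)) = gclass cmp G A f"
  unfolding rep_def by (rule someI2[of _ f]) auto

lemma pos: assumes C: "C \<in> Ob" and f: "f \<in> hom A C"
  shows "pos C f \<in> G A \<and> f = cmp (rep C (gclass cmp G A f)) (pos C f)"
proof -
  have "f \<in> gclass cmp G A (rep C (gclass cmp G A f))" using rep[OF f] mem_own[OF C f] by simp
  then obtain \<alpha> where "\<alpha> \<in> G A \<and> f = cmp (rep C (gclass cmp G A f)) \<alpha>" unfolding gclass_def by auto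
  then show ?thesis unfolding pos_def by (rule someI)
qed

lemma pos_rep: assumes C: "C \<in> Ob" and h: "h \<in> hom A C" and a: "\<alpha> \<in> G A"
  defines "f \<equiv> cmp (rep C (gclass cmp G A h)) \<alpha>"
  shows "f \<in> hom A C" "gclass cmp G A f = gclass cmp G A h" "pos C f = \<alpha>"
proof -
  have r: "rep C (gclass cmp G A h) \<in> hom A C" "gclass cmp G A (rep C (gclass cmp G A h)) = gclass cmp G A h"
    using rep[OF h] by auto
  show f: "f \<in> hom A C" unfolding f_def using shift_hom[OF C r(1) a] .
  show gf: "gclass cmp G A f = gclass cmp G A h" unfolding f_def using gclass_shift[OF C r(1) a] r(2) by simp
  have p: "pos C f \<in> G A" "f = cmp (rep C (gclass cmp G A f)) (pos C f)" using pos[OF C f] by auto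
  have "cmp (rep C (gclass cmp G A h)) (pos C f) = cmp (rep C (gclass cmp G A h)) \<alpha>"
    using p gf f_def by simp
  then show "pos C f = \<alpha>" using canc[OF AOb C AOb r(1)] p(1) a GA_hom by blast
qed


lemma rep_mem: "C \<in> Ob \<Longrightarrow> h \<in> hom A C \<Longrightarrow> rep C (gclass cmp G A h) \<in> gclass cmp G A h"
  using rep[of h C] mem_own[of C "rep C (gclass cmp G A h)"] by auto

lemma reach: assumes B: "B \<in> Ob" and C: "C \<in> Ob" and f: "f \<in> hom A B" and w: "w \<in> hom B C"
  and a: "\<alpha> \<in> G A"
  shows "\<exists>f'\<in>hom A B. cmp (rep C (gclass cmp G A (cmp w f))) \<alpha> = cmp w f'"
proof -
  have h0: "cmp w f \<in> hom A C" using comp[OF AOb B C f w] .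
  obtain \<beta> where b: "\<beta> \<in> G A" "rep C (gclass cmp G A (cmp w f)) = cmp (cmp w f) \<beta>"
    using rep_mem[OF C h0] unfolding gclass_def by auto
  have hs: "\<alpha> \<in> hom A A" "\<beta> \<in> hom A A" using a b GA_hom by auto
  have f1: "cmp f \<beta> \<in> hom A B" using comp[OF AOb AOb B] hs f by blast
  have f2: "cmp (cmp f \<beta>) \<alpha> \<in> hom A B" using comp[OF AOb AOb B] hs f1 by blast
  have "cmp (cmp (cmp w f) \<beta>) \<alpha> = cmp (cmp w (cmp f \<beta>)) \<alpha>"
    using assoc[OF AOb AOb B C, of \<beta> f w] hs f w by simp
  also have "\<dots> = cmp w (cmp (cmp f \<beta>) \<alpha>)"
    using assoc[OF AOb AOb B C, of \<alpha> "cmp f \<beta>" w] hs f1 w by simp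
  finally show ?thesis using b f2 by auto
qed

abbreviation "PE n \<equiv> 0 < n \<and> (\<forall>k::nat. \<forall>B\<in>Ob. \<exists>C\<in>Ob. garrow hom cmp (\<lambda>X. {idm X}) C B A k n)"
abbreviation "PG n \<equiv> 0 < n \<and> (\<forall>k::nat. \<forall>B\<in>Ob. \<exists>C\<in>Ob. garrow hom cmp G C B A k n)"

lemma up: assumes fin: "finite (G A)" and PG: "PG m"
  shows "PE (card (G A) * m)"
proof -
  define g where "g = card (G A)"
  have gpos: "0 < g" unfolding g_def using fin idG card_gt_0_iff by blast
  have "garrow hom cmp (\<lambda>X. {idm X}) C B A k (g * m)"
    if C: "C \<in> Ob" and B: "B \<in> Ob" and GC: "garrow hom cmp G C B A (k ^ g) m" for k B C
  proof -
    define S where "S = G A \<rightarrow>\<^sub>E {..<k}"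
    have finS: "finite S" unfolding S_def using fin by (simp add: finite_PiE)
    have cS: "card S = k ^ g" unfolding S_def g_def using fin by (simp add: card_funcsetE)
    obtain e where e: "bij_betw e S {0..<card S}" using ex_bij_betw_finite_nat[OF finS] by blast
    show ?thesis unfolding garrow_def
    proof (intro allI impI)
      fix \<chi> :: "'m set \<Rightarrow> nat"
      assume h\<chi>: "\<forall>X\<in>gbinom hom cmp (\<lambda>X. {idm X}) C A. \<chi> X < k"
      have \<chi>f: "\<chi> {f} < k" if "f \<in> hom A C" for f
        using h\<chi> that gclass_E[OF C that] unfolding gbinom_def by force
      define \<tau> where "\<tau> X = (\<lambda>\<alpha>\<in>G A. \<chi> {cmp (rep C X) \<alpha>})" for X
      have \<tau>S: "\<tau> X \<in> S" if XG: "X \<in> gbinom hom cmp G C A" for X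
      proof -
        obtain f where f: "f \<in> hom A C" "X = gclass cmp G A f" using XG unfolding gbinom_def by auto
        have "rep C X \<in> hom A C" using rep[OF f(1)] f(2) by simp
        then show ?thesis unfolding S_def \<tau>_def using \<chi>f shift_hom[OF C] by auto
      qed
      define \<chi>' where "\<chi>' X = e (\<tau> X)" for X
      have "\<forall>X\<in>gbinom hom cmp G C A. \<chi>' X < k ^ g"
        using \<tau>S e cS unfolding \<chi>'_def bij_betw_def by auto
      then obtain w where w: "w \<in> hom B C" and cw: "card (\<chi>' ` gbinom_comp hom cmp G w B A) \<le> m"
        using GC unfolding garrow_def by blast
      define YG where "YG = gbinom_comp hom cmp G w B A"
      have YGsub: "YG \<subseteq> gbinom hom cmp G C A"
        unfolding YG_def gbinom_comp_def gbinom_def using comp[OF AOb B C] w by auto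
      have \<tau>YG: "\<tau> ` YG \<subseteq> S" using YGsub \<tau>S by auto
      have fin\<tau>: "finite (\<tau> ` YG)" using \<tau>YG finS finite_subset by blast
      have "\<chi>' ` YG = e ` (\<tau> ` YG)" unfolding \<chi>'_def by auto
      moreover have "inj_on e (\<tau> ` YG)" using e \<tau>YG unfolding bij_betw_def by (metis inj_on_subset)
      ultimately have c\<tau>: "card (\<tau> ` YG) \<le> m" using cw card_image unfolding YG_def by metis
      have sub: "\<chi> ` gbinom_comp hom cmp (\<lambda>X. {idm X}) w B A \<subseteq> (\<Union>T\<in>\<tau> ` YG. T ` G A)"
      proof
        fix x assume "x \<in> \<chi> ` gbinom_comp hom cmp (\<lambda>X. {idm X}) w B A"
        then obtain f where f: "f \<in> hom A B" "x = \<chi> (gclass cmp (\<lambda>X. {idm X}) A (cmp w f))"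
          unfolding gbinom_comp_def by auto
        have h: "cmp w f \<in> hom A C" using comp[OF AOb B C] f w by blast
        have x: "x = \<chi> {cmp w f}" using f gclass_E[OF C h] by simp
        define X where "X = gclass cmp G A (cmp w f)"
        have XY: "X \<in> YG" unfolding X_def YG_def gbinom_comp_def using f by auto
        have p: "pos C (cmp w f) \<in> G A" "cmp w f = cmp (rep C X) (pos C (cmp w f))"
          using pos[OF C h] unfolding X_def by auto
        have "\<tau> X (pos C (cmp w f)) = x" unfolding \<tau>_def using p x by simp
        then show "x \<in> (\<Union>T\<in>\<tau> ` YG. T ` G A)" using XY p by blast
      qed
      have "card (\<Union>T\<in>\<tau> ` YG. T ` G A) \<le> (\<Sum>T\<in>\<tau> ` YG. card (T ` G A))"
        using card_UN_le[OF fin\<tau>] .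
      also have "\<dots> \<le> (\<Sum>T\<in>\<tau> ` YG. g)" 
        by (rule sum_mono) (simp add: card_image_le fin g_def)
      also have "\<dots> = card (\<tau> ` YG) * g" by simp
      also have "\<dots> \<le> g * m" using c\<tau> by (simp add: mult.commute)
      finally have "card (\<Union>T\<in>\<tau> ` YG. T ` G A) \<le> g * m" .
      moreover have "finite (\<Union>T\<in>\<tau> ` YG. T ` G A)" using fin\<tau> fin by blast
      ultimately show "\<exists>w\<in>hom B C. card (\<chi> ` gbinom_comp hom cmp (\<lambda>X. {idm X}) w B A) \<le> g * m"
        using w sub card_mono le_trans by blast
    qed
  qed
  then show ?thesis using PG gpos unfolding g_def by (metis nat_0_less_mult_iff)
qed


lemma down_fin: assumes PE: "PE n" shows "finite (G A) \<and> card (G A) \<le> n"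
proof (rule ccontr)
  assume nf: "\<not> (finite (G A) \<and> card (G A) \<le> n)"
  obtain T where T: "T \<subseteq> G A" "finite T" "card T = Suc n"
  proof (cases "finite (G A)")
    case True
    then have "Suc n \<le> card (G A)" using nf by auto
    then show ?thesis using obtain_subset_with_card_n that by metis
  next
    case False
    then show ?thesis using infinite_arbitrarily_large that by metis
  qed
  obtain ix where ix: "bij_betw ix T {0..<Suc n}" using ex_bij_betw_finite_nat[OF T(2)] T(3) by metis
  obtain C where C: "C \<in> Ob" and GC: "garrow hom cmp (\<lambda>X. {idm X}) C A A (Suc n) n"
    using PE AOb by blast
  define \<chi> where "\<chi> Z = (if pos C (the_elem Z) \<in> T then ix (pos C (the_elem Z)) else 0)" for Z
  have lt: "\<chi> Z < Suc n" for Z unfolding \<chi>_def using ix bij_betw_apply by fastforce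
  then obtain w where w: "w \<in> hom A C" and cw: "card (\<chi> ` gbinom_comp hom cmp (\<lambda>X. {idm X}) w A A) \<le> n"
    using GC unfolding garrow_def by blast
  have "{0..<Suc n} \<subseteq> \<chi> ` gbinom_comp hom cmp (\<lambda>X. {idm X}) w A A"
  proof
    fix i assume i: "i \<in> {0..<Suc n}"
    define \<alpha> where "\<alpha> = inv_into T ix i"
    have aT: "\<alpha> \<in> T" and ia: "ix \<alpha> = i" unfolding \<alpha>_def using ix i
      by (auto simp: bij_betw_def inv_into_into f_inv_into_f)
    have a: "\<alpha> \<in> G A" using aT T by auto
    have wA: "cmp w (idm A) = w" using idr[OF AOb C w] .
    obtain f' where f': "f' \<in> hom A A" "cmp (rep C (gclass cmp G A w)) \<alpha> = cmp w f'"
      using reach[OF AOb C idA w a] wA by auto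
    define h where "h = cmp (rep C (gclass cmp G A w)) \<alpha>"
    have hh: "h \<in> hom A C" "pos C h = \<alpha>" using pos_rep[OF C w a] unfolding h_def by auto
    have "gclass cmp (\<lambda>X. {idm X}) A (cmp w f') = {h}" using f' h_def gclass_E[OF C hh(1)] by simp
    moreover have "\<chi> {h} = i" unfolding \<chi>_def using hh aT ia by simp
    ultimately show "i \<in> \<chi> ` gbinom_comp hom cmp (\<lambda>X. {idm X}) w A A"
      unfolding gbinom_comp_def using f' by force
  qed
  moreover have "\<chi> ` gbinom_comp hom cmp (\<lambda>X. {idm X}) w A A \<subseteq> {0..<Suc n}" using lt by auto
  ultimately have "card {0..<Suc n} \<le> card (\<chi> ` gbinom_comp hom cmp (\<lambda>X. {idm X}) w A A)"
    by (meson card_mono finite_atLeastLessThan finite_subset)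
  then show False using cw by simp
qed

lemma down: assumes PE: "PE n" shows "PG (n div card (G A))"
proof -
  define g where "g = card (G A)"
  have fin: "finite (G A)" and gn: "g \<le> n" using down_fin[OF PE] unfolding g_def by auto
  have gpos: "0 < g" unfolding g_def using fin idG card_gt_0_iff by blast
  obtain ix where ix: "bij_betw ix (G A) {0..<g}" using ex_bij_betw_finite_nat[OF fin] unfolding g_def by blast
  have "garrow hom cmp G C B A k (n div g)"
    if C: "C \<in> Ob" and B: "B \<in> Ob" and GC: "garrow hom cmp (\<lambda>X. {idm X}) C B A (k * g) n" for k B C
  unfolding garrow_def
  proof (intro allI impI)
    fix \<chi> :: "'m set \<Rightarrow> nat"
    assume h\<chi>: "\<forall>X\<in>gbinom hom cmp G C A. \<chi> X < k"
    define \<chi>E where "\<chi>E Z = \<chi> (gclass cmp G A (the_elem Z)) * g + ix (pos C (the_elem Z))" for Z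
    have "\<chi>E X < k * g" if XE: "X \<in> gbinom hom cmp (\<lambda>X. {idm X}) C A" for X
    proof -
      obtain f where f: "f \<in> hom A C" "X = {f}" using XE gclass_E[OF C] unfolding gbinom_def by auto
      have c: "\<chi> (gclass cmp G A f) < k" using h\<chi> f unfolding gbinom_def by auto
      have i: "ix (pos C f) < g" using pos[OF C f(1)] ix bij_betw_apply by fastforce
      have "\<chi> (gclass cmp G A f) * g + ix (pos C f) < \<chi> (gclass cmp G A f) * g + g" using i by simp
      also have "\<dots> = (\<chi> (gclass cmp G A f) + 1) * g" by simp
      also have "\<dots> \<le> k * g" using c by (intro mult_right_mono) auto
      finally show ?thesis unfolding \<chi>E_def using f by simp
    qed
    then obtain w where w: "w \<in> hom B C" and cw: "card (\<chi>E ` gbinom_comp hom cmp (\<lambda>X. {idm X}) w B A) \<le> n"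
      using GC unfolding garrow_def by blast
    define YG where "YG = gbinom_comp hom cmp G w B A"
    define YE where "YE = gbinom_comp hom cmp (\<lambda>X. {idm X}) w B A"
    have sub: "(\<lambda>(c, i). c * g + i) ` ((\<chi> ` YG) \<times> {0..<g}) \<subseteq> \<chi>E ` YE"
    proof
      fix x assume "x \<in> (\<lambda>(c, i). c * g + i) ` ((\<chi> ` YG) \<times> {0..<g})"
      then obtain f i where f: "f \<in> hom A B" and i: "i < g"
        and x: "x = \<chi> (gclass cmp G A (cmp w f)) * g + i"
        unfolding YG_def gbinom_comp_def by auto
      have h0: "cmp w f \<in> hom A C" using comp[OF AOb B C] f w by blast
      define \<alpha> where "\<alpha> = inv_into (G A) ix i"
      have a: "\<alpha> \<in> G A" and ia: "ix \<alpha> = i" unfolding \<alpha>_def using ix i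
        by (auto simp: bij_betw_def inv_into_into f_inv_into_f)
      obtain f' where f': "f' \<in> hom A B" "cmp (rep C (gclass cmp G A (cmp w f))) \<alpha> = cmp w f'"
        using reach[OF B C f w a] by auto
      define h where "h = cmp (rep C (gclass cmp G A (cmp w f))) \<alpha>"
      have hh: "h \<in> hom A C" "gclass cmp G A h = gclass cmp G A (cmp w f)" "pos C h = \<alpha>"
        using pos_rep[OF C h0 a] unfolding h_def by auto
      have "gclass cmp (\<lambda>X. {idm X}) A (cmp w f') = {h}" using f' h_def gclass_E[OF C hh(1)] by simp
      moreover have "\<chi>E {h} = x" unfolding \<chi>E_def using hh ia x by simp
      ultimately show "x \<in> \<chi>E ` YE" unfolding YE_def gbinom_comp_def using f' by force
    qed
    have YGsub: "YG \<subseteq> gbinom hom cmp G C A"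
      unfolding YG_def gbinom_comp_def gbinom_def using comp[OF AOb B C] w by auto
    have finc: "finite (\<chi> ` YG)" using YGsub h\<chi> by (meson finite_lessThan finite_subset image_subsetI lessThan_iff subsetD)
    have "inj_on (\<lambda>(c, i). c * g + i) ((\<chi> ` YG) \<times> {0..<g})"
    proof (rule inj_onI, clarsimp)
      fix c i c' i' assume "i < g" "i' < g" "c * g + i = c' * g + i'"
      then show "c = c' \<and> i = i'" using gpos
        by (metis add.commute div_mult_self1 div_less mod_mult_self1 mod_less not_less0 plus_nat.add_0 gr_implies_not0)
    qed
    then have "card ((\<lambda>(c, i). c * g + i) ` ((\<chi> ` YG) \<times> {0..<g})) = card (\<chi> ` YG) * g"
      by (simp add: card_image card_cartesian_product)
    moreover have "finite (\<chi>E ` YE)"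
    proof -
      have "\<chi>E ` YE \<subseteq> (\<lambda>(c, i). c * g + i) ` ((\<chi> ` YG) \<times> {0..<g})"
      proof
        fix x assume "x \<in> \<chi>E ` YE"
        then obtain f where f: "f \<in> hom A B" "x = \<chi>E (gclass cmp (\<lambda>X. {idm X}) A (cmp w f))"
          unfolding YE_def gbinom_comp_def by auto
        have h0: "cmp w f \<in> hom A C" using comp[OF AOb B C] f w by blast
        have "x = \<chi> (gclass cmp G A (cmp w f)) * g + ix (pos C (cmp w f))"
          using f gclass_E[OF C h0] unfolding \<chi>E_def by simp
        moreover have "gclass cmp G A (cmp w f) \<in> YG" unfolding YG_def gbinom_comp_def using f by auto
        moreover have "ix (pos C (cmp w f)) < g" using pos[OF C h0] ix bij_betw_apply by fastforce
        ultimately show "x \<in> (\<lambda>(c, i). c * g + i) ` ((\<chi> ` YG) \<times> {0..<g})" by force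
      qed
      then show ?thesis using finc by (meson finite_SigmaI finite_atLeastLessThan finite_imageI finite_subset)
    qed
    ultimately have "card (\<chi> ` YG) * g \<le> n" using sub cw card_mono unfolding YE_def
      by (metis le_trans)
    then have "card (\<chi> ` YG) \<le> n div g" using gpos by (simp add: less_eq_div_iff_mult_less_eq)
    then show "\<exists>w\<in>hom B C. card (\<chi> ` gbinom_comp hom cmp G w B A) \<le> n div g" using w unfolding YG_def by blast
  qed
  moreover have "0 < n div g" using gn gpos by (simp add: div_greater_zero_iff)
  ultimately show ?thesis using PE unfolding g_def by blast
qed


lemma main: "small_ramsey_degree Ob hom cmp idm A = ecard (G A) * small_G_ramsey_degree Ob hom cmp G A"
proof (cases "\<exists>n. PE n")
  case True
  define t where "t = (LEAST n. PE n)"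
  have Pt: "PE t" unfolding t_def by (rule LeastI_ex[OF True])
  have L: "small_ramsey_degree Ob hom cmp idm A = enat t"
    unfolding small_ramsey_degree_def small_G_ramsey_degree_def t_def Let_def using True by simp
  obtain fin: "finite (G A)" using down_fin[OF Pt] by blast
  define g where "g = card (G A)"
  have PGd: "PG (t div g)" using down[OF Pt] unfolding g_def .
  then have ex: "\<exists>n. PG n" by (rule exI)
  define tg where "tg = (LEAST n. PG n)"
  have Ptg: "PG tg" unfolding tg_def by (rule LeastI_ex[OF ex])
  have tgle: "tg \<le> t div g" unfolding tg_def using PGd by (rule Least_le)
  have R: "small_G_ramsey_degree Ob hom cmp G A = enat tg"
    unfolding small_G_ramsey_degree_def tg_def Let_def using ex by simp
  have "PE (g * tg)" using up[OF fin Ptg] unfolding g_def .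
  then have "t \<le> g * tg" unfolding t_def by (rule Least_le)
  moreover have "g * tg \<le> t"
  proof -
    have "g * tg \<le> g * (t div g)" by (rule mult_le_mono2[OF tgle])
    also have "\<dots> \<le> t" by simp
    finally show ?thesis .
  qed
  ultimately have "t = g * tg" by simp
  then show ?thesis using L R fin unfolding ecard_def g_def by simp
next
  case False
  have L: "small_ramsey_degree Ob hom cmp idm A = \<infinity>"
    unfolding small_ramsey_degree_def small_G_ramsey_degree_def Let_def using False by simp
  have nz: "small_G_ramsey_degree Ob hom cmp G A \<noteq> 0"
  proof (cases "\<exists>n. PG n")
    case True
    then have "PG (LEAST n. PG n)" by (rule LeastI_ex)
    then show ?thesis unfolding small_G_ramsey_degree_def Let_def using True by (simp add: zero_enat_def)
  next
    case False
    show ?thesis unfolding small_G_ramsey_degree_def Let_def by (subst if_not_P[OF False]) simp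
  qed
  show ?thesis
  proof (cases "finite (G A)")
    case False
    then show ?thesis using L nz unfolding ecard_def by (simp add: imult_is_infinity eq_commute[of "\<infinity>::enat"])
  next
    case fin: True
    have "\<not> (\<exists>n. PG n)"
    proof
      assume "\<exists>n. PG n"
      then obtain n where "PG n" by blast
      from up[OF fin this] have "\<exists>n. PE n" by (rule exI)
      then show False using False by (rule notE[rotated])
    qed
    then have "small_G_ramsey_degree Ob hom cmp G A = \<infinity>"
      unfolding small_G_ramsey_degree_def Let_def by simp
    moreover have "card (G A) \<noteq> 0" using fin idG by auto
    ultimately show ?thesis using L fin unfolding ecard_def by (simp add: imult_is_infinity zero_enat_def)
  qed
qed

end

theorem proposition3p3:
  fixes Ob :: "'o set" and hom :: "'o \<Rightarrow> 'o \<Rightarrow> 'm set"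
    and cmp :: "'m \<Rightarrow> 'm \<Rightarrow> 'm" and idm :: "'o \<Rightarrow> 'm"
    and G :: "'o \<Rightarrow> 'm set" and A :: 'o
  assumes "category Ob hom cmp idm"
    and "all_mono Ob hom cmp"
    and "\<forall>X\<in>Ob. subgroup_Aut hom cmp idm X (G X)"
    and "A \<in> Ob"
  shows "small_ramsey_degree Ob hom cmp idm A
           = ecard (G A) * small_G_ramsey_degree Ob hom cmp G A"
proof -
  interpret rsetting Ob hom cmp idm G A using assms by unfold_locales
  show ?thesis by (rule main)
qed

end
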